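(* For all $t\ge0$ and $\tau>0$, the function $u\mapsto\Xi(u,t,\tau)$ is convex and essentially smooth on $\mathcal{K}_{t,\tau}$.
   Context: Parameters $v,\xi>0$, $\rho\in(-1,1)$, $\bar\rho:=\sqrt{1-\rho^2}$. $\Xi(u,t,\tau):=\frac{uv}{\xi(\bar\rho\cot(\frac12\xi\bar\rho\tau u)-\rho)-\frac12\xi^2tu}$ with $\Xi(0,t,\tau):=0$; $\mathcal{K}_{t,\tau}$ is the connected component containing $0$ of $\{u\in\mathbb{R}:\Xi(u,0,\tau)<\frac{2v}{\xi^2t}\}$ ($2v/(\xi^2t):=+\infty$ if $t=0$). A convex function $h$ on an interval is essentially smooth if its interior is nonempty, $h$ is differentiable there, and $|h'(u_n)|\to\infty$ for every sequence $u_n$ in the interior converging to a boundary point. *)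

theory Defs
  imports "HOL-Analysis.Analysis"
begin

definition rhobar :: "real \<Rightarrow> real" where
  "rhobar \<rho> = sqrt (1 - \<rho>^2)"

definition Xi_den :: "real \<Rightarrow> real \<Rightarrow> real \<Rightarrow> real \<Rightarrow> real \<Rightarrow> real" where
  "Xi_den \<xi> \<rho> u t \<tau> =
     \<xi> * (rhobar \<rho> * cot (\<xi> * rhobar \<rho> * \<tau> * u / 2) - \<rho>) - \<xi>^2 * t * u / 2"

definition Xi :: "real \<Rightarrow> real \<Rightarrow> real \<Rightarrow> real \<Rightarrow> real \<Rightarrow> real \<Rightarrow> real" where
  "Xi v \<xi> \<rho> u t \<tau> = (if u = 0 then 0 else u * v / Xi_den \<xi> \<rho> u t \<tau>)"

definition Xi_defined :: "real \<Rightarrow> real \<Rightarrow> real \<Rightarrow> real \<Rightarrow> real \<Rightarrow> bool" where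
  "Xi_defined \<xi> \<rho> u t \<tau> \<longleftrightarrow>
     u = 0 \<or> (sin (\<xi> * rhobar \<rho> * \<tau> * u / 2) \<noteq> 0 \<and> Xi_den \<xi> \<rho> u t \<tau> \<noteq> 0)"

text \<open>K_{t,tau}: connected component containing 0 of {u. Xi(u,0,tau) < 2v/(xi^2 t)},
  where the threshold is +infinity for t = 0 (so the condition is just that Xi(u,0,tau) is finite).\<close>
definition K_set :: "real \<Rightarrow> real \<Rightarrow> real \<Rightarrow> real \<Rightarrow> real \<Rightarrow> real set" where
  "K_set v \<xi> \<rho> t \<tau> = connected_component_set
     {u. Xi_defined \<xi> \<rho> u 0 \<tau> \<and> (t = 0 \<or> Xi v \<xi> \<rho> u 0 \<tau> < 2 * v / (\<xi>^2 * t))} 0"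

definition essentially_smooth_on :: "real set \<Rightarrow> (real \<Rightarrow> real) \<Rightarrow> bool" where
  "essentially_smooth_on K h \<longleftrightarrow>
     interior K \<noteq> {} \<and>
     (\<forall>u\<in>interior K. h differentiable (at u)) \<and>
     (\<forall>x b. (\<forall>n. x n \<in> interior K) \<longrightarrow> x \<longlonglongrightarrow> b \<longrightarrow> b \<in> frontier K \<longrightarrow>
        filterlim (\<lambda>n. \<bar>deriv h (x n)\<bar>) at_top sequentially)"

end

theory Submission
  imports Defs
begin

lemma z_cos_le_sin:
  fixes z :: real assumes "0 \<le> z" "z < pi/2" shows "z * cos z \<le> sin z"
proof -
  have "(\<lambda>x. sin x - x * cos x) 0 \<le> (\<lambda>x. sin x - x * cos x) z"
  proof (rule DERIV_nonneg_imp_increasing_open[OF assms(1)])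
    fix x assume x: "0 < x" "x < z"
    have "((\<lambda>x. sin x - x * cos x) has_real_derivative x * sin x) (at x)"
      by (auto intro!: derivative_eq_intros simp: algebra_simps)
    moreover have "0 \<le> x * sin x" using x assms by (intro mult_nonneg_nonneg sin_ge_zero) auto
    ultimately show "\<exists>y. ((\<lambda>x. sin x - x * cos x) has_real_derivative y) (at x) \<and> 0 \<le> y" by blast
  next
    show "continuous_on {0..z} (\<lambda>x. sin x - x * cos x)" by (intro continuous_intros)
  qed
  then show ?thesis by simp
qed

lemma key_ineq_pos:
  fixes y \<phi> :: real assumes "0 \<le> y" "y < pi/2" "\<phi> < pi/2"
  shows "0 < cos y + (y - \<phi>) * sin y"
proof (cases "y = 0")
  case True then show ?thesis by simp
next
  case False
  then have y: "0 < y" using assms by simp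
  have cy: "0 < cos y" using assms by (intro cos_gt_zero_pi) auto
  have sy: "0 < sin y" using y assms by (intro sin_gt_zero) auto
  show ?thesis
  proof (cases "0 \<le> y - \<phi>")
    case True then show ?thesis using cy sy by (simp add: add_pos_nonneg)
  next
    case False
    define z where "z = pi/2 - y"
    have z: "0 \<le> z" "z < pi/2" using y assms by (auto simp: z_def)
    have "z * cos z \<le> sin z" by (rule z_cos_le_sin[OF z])
    moreover have "cos z = sin y" "sin z = cos y" by (simp_all add: z_def cos_diff sin_diff)
    moreover have "(y - pi/2) * sin y < (y - \<phi>) * sin y" using sy assms by (intro mult_strict_right_mono) auto
    ultimately show ?thesis by (simp add: z_def algebra_simps)
  qed
qed

lemma key_ineq:
  fixes y \<phi> :: real assumes "-(pi/2) < y" "y < pi/2" "-(pi/2) < \<phi>" "\<phi> < pi/2"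
  shows "0 < cos y + (y - \<phi>) * sin y"
proof (cases "0 \<le> y")
  case True then show ?thesis using key_ineq_pos assms by blast
next
  case False
  have "0 < cos (-y) + (-y - (-\<phi>)) * sin (-y)" using False assms by (intro key_ineq_pos) auto
  then show ?thesis by (simp add: algebra_simps)
qed

lemma x_sin_pos:
  fixes x :: real assumes "x \<noteq> 0" "\<bar>x\<bar> < pi" shows "0 < x * sin x"
proof (cases "0 < x")
  case True then show ?thesis using assms by (intro mult_pos_pos sin_gt_zero) auto
next
  case False
  then have "0 < sin (-x)" using assms by (intro sin_gt_zero) auto
  then show ?thesis using False assms by (simp add: mult_neg_neg)
qed


lemma W_deriv1:
  fixes a \<phi> u :: real assumes "cos (a*u+\<phi>) \<noteq> 0"
  shows "((\<lambda>u. cos \<phi> * u * tan (a*u+\<phi>) - sin \<phi> * u) has_real_derivative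
     (cos \<phi> * (tan (a*u+\<phi>) + a*u / (cos (a*u+\<phi>))^2) - sin \<phi>)) (at u)"
  using assms by (auto intro!: derivative_eq_intros simp: field_simps power2_eq_square)

lemma W_deriv2:
  fixes a \<phi> u :: real assumes "cos (a*u+\<phi>) \<noteq> 0"
  shows "((\<lambda>u. cos \<phi> * (tan (a*u+\<phi>) + a*u / (cos (a*u+\<phi>))^2) - sin \<phi>) has_real_derivative
     (2*a*cos \<phi>*(cos(a*u+\<phi>) + a * u * sin (a*u+\<phi>))/(cos(a*u+\<phi>))^3)) (at u)"
  using assms by (auto intro!: derivative_eq_intros simp: field_simps power2_eq_square power3_eq_cube)

lemma I_eq:
  fixes a \<phi> :: real assumes "0 < a"
  shows "{u. -(pi/2) < a*u+\<phi> \<and> a*u+\<phi> < pi/2} = {(-(pi/2)-\<phi>)/a <..< (pi/2-\<phi>)/a}"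
  using assms by (auto simp: field_simps)

lemma W_convex:
  fixes a \<phi> :: real assumes "0 < a" "-(pi/2) < \<phi>" "\<phi> < pi/2"
  shows "convex_on {u. -(pi/2) < a*u+\<phi> \<and> a*u+\<phi> < pi/2} (\<lambda>u. cos \<phi> * u * tan (a*u+\<phi>) - sin \<phi> * u)"
proof (rule f''_ge0_imp_convex)
  show "convex {u. -(pi/2) < a*u+\<phi> \<and> a*u+\<phi> < pi/2}" using I_eq[OF assms(1)] by simp
next
  fix u assume u: "u \<in> {u. -(pi/2) < a*u+\<phi> \<and> a*u+\<phi> < pi/2}"
  then have c: "0 < cos (a*u+\<phi>)" by (intro cos_gt_zero_pi) auto
  then show "((\<lambda>u. cos \<phi> * u * tan (a*u+\<phi>) - sin \<phi> * u) has_real_derivative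
     (cos \<phi> * (tan (a*u+\<phi>) + a*u / (cos (a*u+\<phi>))^2) - sin \<phi>)) (at u)"
    by (intro W_deriv1) auto
  show "((\<lambda>u. cos \<phi> * (tan (a*u+\<phi>) + a*u / (cos (a*u+\<phi>))^2) - sin \<phi>) has_real_derivative
     (2*a*cos \<phi>*(cos(a*u+\<phi>) + a * u * sin (a*u+\<phi>))/(cos(a*u+\<phi>))^3)) (at u)"
    using c by (intro W_deriv2) auto
  have k: "0 < cos (a*u+\<phi>) + ((a*u+\<phi>) - \<phi>) * sin (a*u+\<phi>)"
    using u assms by (intro key_ineq) auto
  have "0 < cos \<phi>" using assms by (intro cos_gt_zero_pi) auto
  then show "0 \<le> 2*a*cos \<phi>*(cos(a*u+\<phi>) + a * u * sin (a*u+\<phi>))/(cos(a*u+\<phi>))^3"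
    using k c assms by (intro divide_nonneg_pos mult_nonneg_nonneg) auto
qed

lemma M_convex:
  fixes c \<xi> v :: real assumes "0 \<le> c" "0 < \<xi>" "0 < v"
  shows "convex_on {w. c*w < \<xi>} (\<lambda>w. v * w/(\<xi> - c*w))"
proof (rule f''_ge0_imp_convex)
  show "convex {w. c*w < \<xi>}" using convex_halfspace_lt[of c \<xi>] by (simp add: inner_real_def)
next
  fix w assume w: "w \<in> {w. c*w < \<xi>}"
  then show "((\<lambda>w. v * w/(\<xi> - c*w)) has_real_derivative v * \<xi>/(\<xi>-c*w)^2) (at w)"
    by (auto intro!: derivative_eq_intros simp: field_simps power2_eq_square)
  show "((\<lambda>w. v * \<xi>/(\<xi>-c*w)^2) has_real_derivative 2 * v * \<xi>*c/(\<xi>-c*w)^3) (at w)"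
  proof -
    have ne: "\<xi> - c*w \<noteq> 0" using w by simp
    have d: "((\<lambda>w. (\<xi> - c*w)^2) has_real_derivative (2*(\<xi>-c*w)*(-c))) (at w)"
      by (auto intro!: derivative_eq_intros)
    have "((\<lambda>w. v * \<xi>/(\<xi>-c*w)^2) has_real_derivative
       (0*(\<xi>-c*w)^2 - v * \<xi>*(2*(\<xi>-c*w)*(-c)))/((\<xi>-c*w)^2*(\<xi>-c*w)^2)) (at w)"
      by (intro DERIV_divide d DERIV_const) (use ne in simp)
    moreover have "(0*(\<xi>-c*w)^2 - v * \<xi>*(2*(\<xi>-c*w)*(-c)))/((\<xi>-c*w)^2*(\<xi>-c*w)^2)
       = 2 * v * \<xi>*c/(\<xi>-c*w)^3"
    proof -
      define q where "q = \<xi> - c*w"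
      have "q \<noteq> 0" using ne q_def by simp
      then show ?thesis unfolding q_def[symmetric] by (simp add: field_simps eval_nat_numeral)
    qed
    ultimately show ?thesis by simp
  qed
  show "0 \<le> 2 * v * \<xi>*c/(\<xi>-c*w)^3" using w assms by auto
qed

lemma M_mono:
  fixes c \<xi> v w1 w2 :: real assumes "0 \<le> c" "0 < \<xi>" "0 < v" "c*w1 < \<xi>" "c*w2 < \<xi>" "w1 \<le> w2"
  shows "v * w1/(\<xi> - c*w1) \<le> v * w2/(\<xi> - c*w2)"
proof -
  have "w1*(\<xi> - c*w2) \<le> w2*(\<xi> - c*w1)" using assms by (simp add: algebra_simps)
  then have "w1/(\<xi> - c*w1) \<le> w2/(\<xi> - c*w2)" using assms by (simp add: divide_simps)
  then show ?thesis using assms by (simp add: mult.assoc divide_simps)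
qed


lemma thresh_iff:
  fixes P v \<xi> t C :: real assumes "0 < v" "0 < \<xi>" "0 < t" "0 < C"
  shows "(P * v / (\<xi> * C) < 2 * v / (\<xi>^2 * t)) \<longleftrightarrow> (\<xi>^2 * t / 2 * P < \<xi> * C)"
proof -
  have "(P * v / (\<xi> * C) < 2 * v / (\<xi>^2 * t)) \<longleftrightarrow> P * v * (\<xi>^2 * t) < 2 * v * (\<xi> * C)"
    using assms by (simp add: divide_simps)
  also have "\<dots> \<longleftrightarrow> v * (P * (\<xi>^2 * t)) < v * (2 * (\<xi> * C))" by (simp add: algebra_simps)
  also have "\<dots> \<longleftrightarrow> P * (\<xi>^2 * t) < 2 * (\<xi> * C)" using assms by simp
  also have "\<dots> \<longleftrightarrow> \<xi>^2 * t / 2 * P < \<xi> * C" by (simp add: algebra_simps)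
  finally show ?thesis .
qed

lemma bound_pi:
  fixes a u \<phi> :: real assumes "0 < a" "-(pi/2) \<le> a*u+\<phi>" "a*u+\<phi> \<le> pi/2" "-(pi/2) < \<phi>" "\<phi> < pi/2"
  shows "\<bar>a*u\<bar> < pi" "\<bar>u\<bar> < pi / a"
proof -
  show 1: "\<bar>a*u\<bar> < pi" using assms by auto
  then have "a * \<bar>u\<bar> < pi" using assms by (simp add: abs_mult)
  then show "\<bar>u\<bar> < pi / a" using assms by (simp add: field_simps)
qed


theorem lemma5p8:
  fixes v \<xi> \<rho> t \<tau> :: real
  assumes "v > 0" and "\<xi> > 0" and "-1 < \<rho>" and "\<rho> < 1"
    and "t \<ge> 0" and "\<tau> > 0"
  shows "convex_on (K_set v \<xi> \<rho> t \<tau>) (\<lambda>u. Xi v \<xi> \<rho> u t \<tau>)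
    \<and> essentially_smooth_on (K_set v \<xi> \<rho> t \<tau>) (\<lambda>u. Xi v \<xi> \<rho> u t \<tau>)"
proof -
  note vpos = \<open>v > 0\<close> and xipos = \<open>\<xi> > 0\<close>
  define r where "r = rhobar \<rho>"
  define \<phi> where "\<phi> = arcsin \<rho>"
  define a where "a = \<xi> * r * \<tau> / 2"
  define c where "c = \<xi>^2 * t / 2"
  define D where "D = (\<lambda>u. \<xi> * cos (a*u+\<phi>) - c * u * sin (a*u))"
  define F where "F = (\<lambda>u. v * u * sin (a*u) / D u)"
  define W where "W = (\<lambda>u. cos \<phi> * u * tan (a*u+\<phi>) - sin \<phi> * u)"
  define M where "M = (\<lambda>w. v * w / (\<xi> - c*w))"
  define T where "T = {u. -(pi/2) < a*u+\<phi> \<and> a*u+\<phi> < pi/2 \<and> 0 < D u}"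
  define Tc where "Tc = {u. -(pi/2) \<le> a*u+\<phi> \<and> a*u+\<phi> \<le> pi/2 \<and> 0 \<le> D u}"
  define S where "S = {u. Xi_defined \<xi> \<rho> u 0 \<tau> \<and> (t = 0 \<or> Xi v \<xi> \<rho> u 0 \<tau> < 2 * v / (\<xi>^2 * t))}"
  define K where "K = connected_component_set T 0"
  have sphi: "sin \<phi> = \<rho>" using assms by (simp add: \<phi>_def)
  have r_eq: "r = cos \<phi>" using assms by (simp add: \<phi>_def r_def rhobar_def cos_arcsin)
  have phib: "-(pi/2) < \<phi>" "\<phi> < pi/2" using arcsin_lt_bounded assms by (auto simp: \<phi>_def)
  have cphi: "0 < cos \<phi>" using phib by (intro cos_gt_zero_pi) auto
  have rpos: "0 < r" using r_eq cphi by simp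
  have apos: "0 < a" using rpos assms by (simp add: a_def)
  have cnn: "0 \<le> c" using assms by (simp add: c_def)
  have arg: "\<And>u. \<xi> * rhobar \<rho> * \<tau> * u / 2 = a * u" by (simp add: a_def r_def)
  have den_eq: "Xi_den \<xi> \<rho> u t' \<tau> = (\<xi> * cos (a*u+\<phi>) - (\<xi>^2*t'/2) * u * sin (a*u)) / sin (a*u)"
    if "sin (a*u) \<noteq> 0" for u t'
  proof -
    have "rhobar \<rho> * cot (a*u) - \<rho> = cos (a*u+\<phi>) / sin (a*u)"
      using that by (simp add: cot_def cos_add r_eq[symmetric] sphi r_def[symmetric] field_simps)
    then have "Xi_den \<xi> \<rho> u t' \<tau> = \<xi> * (cos (a*u+\<phi>) / sin (a*u)) - \<xi>^2*t'*u/2"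
      unfolding Xi_den_def arg by simp
    then show ?thesis using that by (simp add: field_simps)
  qed
  have sin_ne: "sin (a*u) \<noteq> 0" if "u \<noteq> 0" "-(pi/2) \<le> a*u+\<phi>" "a*u+\<phi> \<le> pi/2" for u
  proof -
    have "\<bar>a*u\<bar> < pi" using bound_pi(1)[OF apos that(2,3) phib] .
    then have "0 < (a*u) * sin (a*u)" using that apos by (intro x_sin_pos) auto
    then show ?thesis by auto
  qed
  have cpos_T: "0 < cos (a*u+\<phi>)" if "u \<in> T" for u
    using that by (intro cos_gt_zero_pi) (auto simp: T_def)
  have Xi_F: "Xi v \<xi> \<rho> u t \<tau> = F u" if "u \<in> T" for u
  proof (cases "u = 0")
    case True then show ?thesis by (simp add: Xi_def F_def)
  next
    case False
    have s: "sin (a*u) \<noteq> 0" using that False by (intro sin_ne) (auto simp: T_def)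
    show ?thesis using s False unfolding Xi_def F_def D_def den_eq[OF s] c_def
      by (simp add: divide_divide_eq_right mult.commute mult.left_commute)
  qed
  have d0: "Xi_den \<xi> \<rho> u 0 \<tau> = \<xi> * cos (a*u+\<phi>) / sin (a*u)" if "sin (a*u) \<noteq> 0" for u
    using den_eq[OF that, of 0] by simp
  have X0: "Xi v \<xi> \<rho> u 0 \<tau> = (u * sin (a*u)) * v / (\<xi> * cos (a*u+\<phi>))" if "sin (a*u) \<noteq> 0" "u \<noteq> 0" for u
    using that unfolding Xi_def d0[OF that(1)] by (simp add: divide_divide_eq_right mult.commute mult.left_commute)
  have T_S: "T \<subseteq> S"
  proof
    fix u assume u: "u \<in> T"
    show "u \<in> S"
    proof (cases "u = 0")
      case True then show ?thesis using assms by (cases "t = 0") (auto simp: S_def Xi_defined_def Xi_def intro!: divide_pos_pos)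
    next
      case False
      have s: "sin (a*u) \<noteq> 0" using u False by (intro sin_ne) (auto simp: T_def)
      have cy: "0 < cos (a*u+\<phi>)" using cpos_T[OF u] .
      have "Xi_defined \<xi> \<rho> u 0 \<tau>" using False s d0[OF s] cy xipos by (simp add: Xi_defined_def arg)
      moreover have "t = 0 \<or> Xi v \<xi> \<rho> u 0 \<tau> < 2 * v / (\<xi>^2 * t)"
      proof (cases "t = 0")
        case False
        then have tp: "0 < t" using assms by simp
        have "c * (u * sin (a*u)) < \<xi> * cos (a*u+\<phi>)" using u by (simp add: T_def D_def mult.assoc)
        then show ?thesis unfolding X0[OF s \<open>u \<noteq> 0\<close>] using thresh_iff[OF vpos xipos tp cy] by (simp add: c_def)
      qed simp
      ultimately show ?thesis by (simp add: S_def)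
    qed
  qed
  have D0: "D 0 = \<xi> * cos \<phi>" by (simp add: D_def)
  have zT: "0 \<in> T" using D0 phib cphi xipos by (simp add: T_def)
  have S_Tc: "u \<in> T" if u: "u \<in> S" "u \<in> Tc" for u
  proof (cases "u = 0")
    case True then show ?thesis using zT by simp
  next
    case False
    have s: "sin (a*u) \<noteq> 0" and den: "Xi_den \<xi> \<rho> u 0 \<tau> \<noteq> 0"
      using u False by (auto simp: S_def Xi_defined_def arg)
    have cne: "cos (a*u+\<phi>) \<noteq> 0" using den d0[OF s] by auto
    have y1: "-(pi/2) < a*u+\<phi>"
    proof (rule ccontr)
      assume "\<not> ?thesis" then have "a*u+\<phi> = -(pi/2)" using u by (auto simp: Tc_def)
      then show False using cne by simp
    qed
    have y2: "a*u+\<phi> < pi/2"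
    proof (rule ccontr)
      assume "\<not> ?thesis" then have "a*u+\<phi> = pi/2" using u by (auto simp: Tc_def)
      then show False using cne cos_pi_half by metis
    qed
    have cy: "0 < cos (a*u+\<phi>)" using y1 y2 by (intro cos_gt_zero_pi) auto
    have "0 < D u"
    proof (cases "t = 0")
      case True then show ?thesis using cy xipos by (simp add: D_def c_def)
    next
      case False
      then have tp: "0 < t" using assms by simp
      have "Xi v \<xi> \<rho> u 0 \<tau> < 2 * v / (\<xi>^2 * t)" using u False by (simp add: S_def)
      then have "c * (u * sin (a*u)) < \<xi> * cos (a*u+\<phi>)"
        unfolding X0[OF s \<open>u \<noteq> 0\<close>] using thresh_iff[OF vpos xipos tp cy] by (simp add: c_def)
      then show ?thesis by (simp add: D_def mult.assoc)
    qed
    then show ?thesis using y1 y2 by (simp add: T_def)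
  qed
  have contD: "continuous_on UNIV D" unfolding D_def by (intro continuous_intros)
  have openT: "open T" unfolding T_def D_def
    by (intro open_Collect_conj open_Collect_less continuous_intros)
  have closedTc: "closed Tc" unfolding Tc_def D_def
    by (intro closed_Collect_conj closed_Collect_le continuous_intros)
  have T_Tc: "T \<subseteq> Tc" by (auto simp: T_def Tc_def)
  have KS: "K_set v \<xi> \<rho> t \<tau> = K"
  proof -
    define C where "C = connected_component_set S 0"
    have "K_set v \<xi> \<rho> t \<tau> = C" unfolding K_set_def C_def S_def by simp
    moreover have "C = K"
    proof
      show "K \<subseteq> C" unfolding K_def C_def by (rule connected_component_mono[OF T_S])
    next
      have CS: "C \<subseteq> S" unfolding C_def by (rule connected_component_subset)
      have zC: "0 \<in> C" using zT T_S unfolding C_def by auto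
      have eq: "C \<inter> T = C \<inter> Tc" using CS S_Tc T_Tc by blast
      have "openin (top_of_set C) (C \<inter> T)" using openT by (rule openin_open_Int)
      moreover have "closedin (top_of_set C) (C \<inter> T)" unfolding eq using closedTc by (rule closedin_closed_Int)
      ultimately have "C \<inter> T = {} \<or> C \<inter> T = C"
        using connected_clopen[of C] unfolding C_def by auto
      then have "C \<subseteq> T" using zC zT by blast
      then show "C \<subseteq> K" unfolding K_def using zC unfolding C_def
        by (intro connected_component_maximal) auto
    qed
    ultimately show ?thesis by simp
  qed
  have openK: "open K" unfolding K_def using openT by (rule open_connected_component)
  have KT: "K \<subseteq> T" unfolding K_def by (rule connected_component_subset)
  have zK: "0 \<in> K" unfolding K_def using zT by simp
  have connK: "connected K" unfolding K_def by simp
  have convK: "convex K" using connK connected_convex_1 by blast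
  have KI: "K \<subseteq> {u. -(pi/2) < a*u+\<phi> \<and> a*u+\<phi> < pi/2}" using KT by (auto simp: T_def)
  have WK: "convex_on K W" unfolding W_def by (rule convex_on_subset[OF W_convex[OF apos phib] KI convK])
  have MD: "convex_on {w. c*w < \<xi>} M" unfolding M_def by (rule M_convex[OF cnn xipos vpos])
  have WF: "c * W u < \<xi> \<and> F u = M (W u)" if u: "u \<in> T" for u
  proof -
    have cy: "0 < cos (a*u+\<phi>)" using cpos_T[OF u] .
    have Dp: "c * (u * sin (a*u)) < \<xi> * cos (a*u+\<phi>)" using u by (simp add: T_def D_def mult.assoc)
    have sa: "sin (a*u) = sin (a*u+\<phi>) * cos \<phi> - cos (a*u+\<phi>) * sin \<phi>"
      using sin_diff[of "a*u+\<phi>" \<phi>] by simp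
    have Weq: "W u = u * sin (a*u) / cos (a*u+\<phi>)" unfolding W_def tan_def sa using cy
      by (simp add: field_simps)
    have "c * W u = c * (u * sin (a*u)) / cos (a*u+\<phi>)" unfolding Weq by simp
    also have "\<dots> < \<xi>" using Dp cy by (simp add: pos_divide_less_eq)
    finally have 1: "c * W u < \<xi>" .
    have "M (W u) = v * (u * sin (a*u)) / (\<xi> * cos (a*u+\<phi>) - c * (u * sin (a*u)))"
      unfolding M_def Weq using cy Dp by (simp add: field_simps)
    also have "\<dots> = F u" by (simp add: F_def D_def mult.assoc)
    finally show ?thesis using 1 by simp
  qed
  have convF: "convex_on K F"
  proof (rule convex_onI[OF _ convK])
    fix \<theta> x y :: real assume th: "0 < \<theta>" "\<theta> < 1" and x: "x \<in> K" and y: "y \<in> K"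
    define z where "z = (1-\<theta>) *\<^sub>R x + \<theta> *\<^sub>R y"
    have zK': "z \<in> K" unfolding z_def using convexD[OF convK x y, of "1-\<theta>" \<theta>] th by auto
    have 1: "W z \<le> (1-\<theta>) * W x + \<theta> * W y" using convex_onD[OF WK, of \<theta> x y] th x y by (simp add: z_def)
    have dx: "W x \<in> {w. c*w < \<xi>}" and dy: "W y \<in> {w. c*w < \<xi>}" using WF KT x y by auto
    have dz: "W z \<in> {w. c*w < \<xi>}" using WF KT zK' by auto
    have dd: "(1-\<theta>) * W x + \<theta> * W y \<in> {w. c*w < \<xi>}"
      using convexD[OF convex_on_imp_convex[OF MD] dx dy, of "1-\<theta>" \<theta>] th by simp
    have "M (W z) \<le> M ((1-\<theta>) * W x + \<theta> * W y)"
      unfolding M_def using dz dd 1 by (intro M_mono[OF cnn xipos vpos]) auto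
    also have "\<dots> \<le> (1-\<theta>) * M (W x) + \<theta> * M (W y)"
      using convex_onD[OF MD, of \<theta> "W x" "W y"] th dx dy by simp
    finally have fin: "M (W z) \<le> (1-\<theta>) * M (W x) + \<theta> * M (W y)" .
    have "F z = M (W z)" "F x = M (W x)" "F y = M (W y)" using WF KT x y zK' by auto
    with fin show "F ((1-\<theta>) *\<^sub>R x + \<theta> *\<^sub>R y) \<le> (1-\<theta>) * F x + \<theta> * F y"
      unfolding z_def by simp
  qed
  have convXi: "convex_on K (\<lambda>u. Xi v \<xi> \<rho> u t \<tau>)"
  proof (rule convex_onI[OF _ convK])
    fix \<theta> x y :: real assume th: "0 < \<theta>" "\<theta> < 1" and x: "x \<in> K" and y: "y \<in> K"
    have zK': "(1-\<theta>) *\<^sub>R x + \<theta> *\<^sub>R y \<in> K" using convexD[OF convK x y, of "1-\<theta>" \<theta>] th by auto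
    show "Xi v \<xi> \<rho> ((1-\<theta>) *\<^sub>R x + \<theta> *\<^sub>R y) t \<tau> \<le> (1-\<theta>) * Xi v \<xi> \<rho> x t \<tau> + \<theta> * Xi v \<xi> \<rho> y t \<tau>"
    proof -
      have "Xi v \<xi> \<rho> ((1-\<theta>) *\<^sub>R x + \<theta> *\<^sub>R y) t \<tau> = F ((1-\<theta>) *\<^sub>R x + \<theta> *\<^sub>R y)"
        "Xi v \<xi> \<rho> x t \<tau> = F x" "Xi v \<xi> \<rho> y t \<tau> = F y" using Xi_F KT x y zK' by auto
      then show ?thesis using convex_onD[OF convF, of \<theta> x y] th x y by simp
    qed
  qed
  have Fder: "(F has_real_derivative deriv F u) (at u)" if u: "u \<in> K" for u
  proof -
    have "D u \<noteq> 0" using u KT by (auto simp: T_def)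
    have ds: "(\<lambda>x. sin (a * x)) differentiable at u"
    proof -
      have "((\<lambda>x. sin (a * x)) has_real_derivative cos (a*u) * a) (at u)"
        by (auto intro!: derivative_eq_intros)
      then show ?thesis using real_differentiable_def by blast
    qed
    have dc: "(\<lambda>x. cos (a * x + \<phi>)) differentiable at u"
    proof -
      have "((\<lambda>x. cos (a * x + \<phi>)) has_real_derivative - sin (a*u+\<phi>) * a) (at u)"
        by (auto intro!: derivative_eq_intros)
      then show ?thesis using real_differentiable_def by blast
    qed
    from \<open>D u \<noteq> 0\<close> have "F differentiable (at u)" unfolding F_def D_def
      by (intro derivative_intros ds dc) auto
    then show ?thesis using DERIV_deriv_iff_real_differentiable by blast
  qed
  have Xider: "((\<lambda>u. Xi v \<xi> \<rho> u t \<tau>) has_real_derivative deriv F u) (at u)" if u: "u \<in> K" for u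
    using Fder[OF u] openK u by (rule has_field_derivative_transform_within_open) (use Xi_F KT in auto)
  have dXi: "deriv (\<lambda>u. Xi v \<xi> \<rho> u t \<tau>) u = deriv F u" if u: "u \<in> K" for u
    using Xider[OF u] by (rule DERIV_imp_deriv)
  have intK: "interior K = K" using openK by (rule interior_open)
  have blow: "filterlim (\<lambda>n. \<bar>deriv (\<lambda>u. Xi v \<xi> \<rho> u t \<tau>) (x n)\<bar>) at_top sequentially"
    if xK: "\<forall>n. x n \<in> K" and lim: "x \<longlonglongrightarrow> b" and fb: "b \<in> frontier K" for x b
  proof -
    have "b \<in> frontier T" using fb frontier_of_connected_component_subset unfolding K_def by blast
    then have bcl: "b \<in> closure T" and bT: "b \<notin> T" using openT by (auto simp: frontier_def interior_open)
    have bTc: "b \<in> Tc" using bcl closure_minimal[OF T_Tc closedTc] by blast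
    then have yb: "-(pi/2) \<le> a*b+\<phi>" "a*b+\<phi> \<le> pi/2" and Dbge: "0 \<le> D b" by (auto simp: Tc_def)
    have absb: "\<bar>a*b\<bar> < pi" "\<bar>b\<bar> < pi / a" using bound_pi[OF apos yb phib] by auto
    have bsnn: "0 \<le> b * sin (a*b)"
    proof (cases "b = 0")
      case False
      then have "0 < (a*b) * sin (a*b)" using absb apos by (intro x_sin_pos) auto
      then have "0 < a * (b * sin (a*b))" by (simp add: mult.assoc)
      then have "0 < b * sin (a*b)" using apos by (simp add: zero_less_mult_iff)
      then show ?thesis by simp
    qed simp
    have Dble: "D b \<le> 0"
    proof (cases "-(pi/2) < a*b+\<phi> \<and> a*b+\<phi> < pi/2")
      case True then show ?thesis using bT by (auto simp: T_def)
    next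
      case False
      then have "a*b+\<phi> = -(pi/2) \<or> a*b+\<phi> = pi/2" using yb by auto
      then have "cos (a*b+\<phi>) = 0" by (metis cos_pi_half cos_minus)
      then have "D b = - (c * (b * sin (a*b)))" by (simp add: D_def mult.assoc)
      then show ?thesis using cnn bsnn by simp
    qed
    have Db: "D b = 0" using Dble Dbge by simp
    have bne: "b \<noteq> 0" using Db D0 xipos cphi by auto
    have bpos: "0 < b * sin (a*b)"
    proof -
      have "0 < (a*b) * sin (a*b)" using absb apos bne by (intro x_sin_pos) auto
      then have "0 < a * (b * sin (a*b))" by (simp add: mult.assoc)
      then show ?thesis using apos by (simp add: zero_less_mult_iff)
    qed
    have Dlim: "((\<lambda>n. D (x n)) \<longlongrightarrow> 0) sequentially"
    proof -
      have "((\<lambda>n. D (x n)) \<longlongrightarrow> D b) sequentially" unfolding D_def by (intro tendsto_intros lim)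
      then show ?thesis using Db by simp
    qed
    have Dev: "eventually (\<lambda>n. 0 < D (x n)) sequentially" using xK KT by (intro always_eventually) (auto simp: T_def)
    have nlim: "((\<lambda>n. v * x n * sin (a * x n)) \<longlongrightarrow> v * b * sin (a*b)) sequentially"
      by (intro tendsto_intros lim)
    have npos: "0 < v * b * sin (a*b)" using bpos vpos by (simp add: mult.assoc)
    have Flim: "filterlim (\<lambda>n. F (x n)) at_top sequentially"
    proof -
      have "filterlim (\<lambda>n. v * x n * sin (a * x n) * inverse (D (x n))) at_top sequentially"
        by (rule filterlim_tendsto_pos_mult_at_top[OF nlim npos filterlim_inverse_at_top[OF Dlim Dev]])
      then show ?thesis by (simp add: F_def divide_inverse)
    qed
    have lim2: "filterlim (\<lambda>n. (a/pi) * F (x n)) at_top sequentially"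
      using apos by (intro filterlim_tendsto_pos_mult_at_top[OF tendsto_const _ Flim]) auto
    have le: "(a/pi) * F (x n) \<le> \<bar>deriv (\<lambda>u. Xi v \<xi> \<rho> u t \<tau>) (x n)\<bar>" for n
    proof -
      have xn: "x n \<in> K" using xK by simp
      have "deriv F (x n) * (0 - x n) \<le> F 0 - F (x n)"
        using convex_on_imp_above_tangent[OF convF connK, of "x n" 0 "deriv F (x n)"]
          xn zK intK has_field_derivative_at_within[OF Fder[OF xn]] by auto
      then have t1: "F (x n) \<le> deriv F (x n) * x n" by (simp add: F_def)
      have "x n \<in> T" using xn KT by auto
      then have xb: "\<bar>x n\<bar> < pi / a" using bound_pi(2)[OF apos _ _ phib, of "x n"] by (auto simp: T_def)
      have "deriv F (x n) * x n \<le> \<bar>deriv F (x n)\<bar> * \<bar>x n\<bar>" by (simp add: abs_mult[symmetric])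
      also have "\<dots> \<le> \<bar>deriv F (x n)\<bar> * (pi / a)" using xb by (intro mult_left_mono) auto
      finally have "F (x n) \<le> \<bar>deriv F (x n)\<bar> * (pi / a)" using t1 by simp
      then have "(a/pi) * F (x n) \<le> \<bar>deriv F (x n)\<bar>" using apos by (simp add: field_simps)
      then show ?thesis using dXi[OF xn] by simp
    qed
    show ?thesis by (rule filterlim_at_top_mono[OF lim2]) (use le in auto)
  qed
  have "essentially_smooth_on K (\<lambda>u. Xi v \<xi> \<rho> u t \<tau>)"
    unfolding essentially_smooth_on_def intK
  proof (intro conjI ballI allI impI)
    show "K \<noteq> {}" using zK by auto
  next
    fix u assume "u \<in> K"
    then show "(\<lambda>u. Xi v \<xi> \<rho> u t \<tau>) differentiable (at u)"
      using Xider real_differentiable_def by blast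
  next
    fix x b assume "\<forall>n. x n \<in> K" "x \<longlonglongrightarrow> b" "b \<in> frontier K"
    then show "filterlim (\<lambda>n. \<bar>deriv (\<lambda>u. Xi v \<xi> \<rho> u t \<tau>) (x n)\<bar>) at_top sequentially"
      by (rule blow)
  qed
  then show ?thesis using convXi KS by simp
qed

end
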